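(* Let $\mathbb{F}$ be a field, $d\ge 1$, and $P_d=\mathbb{F}[x_1,\dots,x_d]$. For $k\ge 3$ let $D_k$ be the set of monomials of degree $k$ in $x_1,\dots,x_{k-1}$ not divisible by $x_{k-1}^2$ (if $d<k-1$, $D_k$ is the set of all monomials of degree $k$ in $x_1,\dots,x_d$), and let $K_d\subseteq P_d$ be the ideal generated by $x_1^3,\dots,x_d^3$ and $\bigcup_{k=3}^{d+1}D_k$. Let $\mu\in P_d$ be a monomial. (a) If $\mu\notin K_d$ and $\deg(\mu)\le d-1$, then there exists a monomial $\widetilde\mu\in P_d$ that is a multiple of $\mu$ of degree $d$, with $\widetilde\mu\notin K_d$, and such that $\widetilde\mu$ ends in $x_d$ or in $x_d^2$. (b) If $\mu\notin K_d$, $\deg(\mu)=d$, and $\mu$ does not end in $x_{d-1}^2$, then there exists a monomial $\widetilde\mu\in P_d$ that is a multiple of $\mu$ of degree $d+1$ with $\widetilde\mu\notin K_d$.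
   Context: A monomial $m$ is said to end in $x_j^{e}$ if $m=x_1^{a_1}\cdots x_{j-1}^{a_{j-1}}x_j^{e}$, i.e. $m$ involves no variable $x_i$ with $i>j$ and the exponent of $x_j$ in $m$ is $e$. *)

theory Defs
  imports "HOL-Library.Poly_Mapping"
begin

text \<open>Polynomials over a field in variables x_1, x_2, ... : maps from exponent
vectors (nat =>0 nat) to coefficients.  Variable x_i has index i.\<close>
type_synonym 'a mpoly = "(nat \<Rightarrow>\<^sub>0 nat) \<Rightarrow>\<^sub>0 'a"

definition mon :: "(nat \<Rightarrow>\<^sub>0 nat) \<Rightarrow> 'a::field mpoly" where
  "mon \<alpha> = Poly_Mapping.single \<alpha> 1"

definition var :: "nat \<Rightarrow> 'a::field mpoly" where
  "var i = mon (Poly_Mapping.single i 1)"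

definition mdeg :: "(nat \<Rightarrow>\<^sub>0 nat) \<Rightarrow> nat" where
  "mdeg \<alpha> = (\<Sum>i\<in>Poly_Mapping.keys \<alpha>. Poly_Mapping.lookup \<alpha> i)"

definition P :: "nat \<Rightarrow> 'a::field mpoly set" where
  "P d = {p. \<forall>\<alpha>\<in>Poly_Mapping.keys p. Poly_Mapping.keys \<alpha> \<subseteq> {1..d}}"

definition monomials :: "nat \<Rightarrow> 'a::field mpoly set" where
  "monomials d = {mon \<alpha> | \<alpha>. Poly_Mapping.keys \<alpha> \<subseteq> {1..d}}"

definition ends_in :: "(nat \<Rightarrow>\<^sub>0 nat) \<Rightarrow> nat \<Rightarrow> nat \<Rightarrow> bool" where
  "ends_in \<alpha> j e \<longleftrightarrow> Poly_Mapping.keys \<alpha> \<subseteq> {1..j} \<and> Poly_Mapping.lookup \<alpha> j = e"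

definition D :: "nat \<Rightarrow> nat \<Rightarrow> 'a::field mpoly set" where
  "D d k = (if d < k - 1
     then {mon \<alpha> | \<alpha>. Poly_Mapping.keys \<alpha> \<subseteq> {1..d} \<and> mdeg \<alpha> = k}
     else {mon \<alpha> | \<alpha>. Poly_Mapping.keys \<alpha> \<subseteq> {1..k-1} \<and> mdeg \<alpha> = k \<and> Poly_Mapping.lookup \<alpha> (k-1) < 2})"

definition ideal_gen :: "'a::comm_ring_1 set \<Rightarrow> 'a set \<Rightarrow> 'a set" where
  "ideal_gen R G = {p. \<exists>S c. finite S \<and> S \<subseteq> G \<and> (\<forall>g\<in>S. c g \<in> R) \<and> p = (\<Sum>g\<in>S. c g * g)}"

definition K :: "nat \<Rightarrow> 'a::field mpoly set" where
  "K d = ideal_gen (P d)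
     ({var i ^ 3 | i. 1 \<le> i \<and> i \<le> d} \<union> (\<Union>k\<in>{3..d+1}. D d k))"

end

theory Submission
  imports Defs
begin

lemma var_cube: "(var i :: 'a::field mpoly) ^ 3 = mon (Poly_Mapping.single i 3)"
proof -
  have "Poly_Mapping.single i (1::nat) + Poly_Mapping.single i 1 + Poly_Mapping.single i 1 = Poly_Mapping.single i 3"
    by (simp flip: single_add add: numeral_3_eq_3)
  then show ?thesis by (simp add: var_def mon_def power3_eq_cube mult_single)
qed

lemma mon_mult: "(mon a :: 'a::field mpoly) * mon b = mon (a + b)"
  by (simp add: mon_def mult_single)

lemma lookup_mult_mon_zero:
  assumes "\<And>x. \<alpha> \<noteq> x + \<gamma>"
  shows "Poly_Mapping.lookup (c * (mon \<gamma> :: 'a::field mpoly)) \<alpha> = 0"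
proof -
  have "\<And>l q. (Poly_Mapping.lookup (mon \<gamma> :: 'a mpoly) q when \<alpha> = l + q) = 0"
    using assms by (auto simp: mon_def lookup_single when_def)
  then show ?thesis by (simp add: lookup_mult)
qed

lemma mdeg_S:
  assumes "Poly_Mapping.keys \<alpha> \<subseteq> {1..d}"
  shows "mdeg \<alpha> = (\<Sum>i=1..d. Poly_Mapping.lookup \<alpha> i)"
  unfolding mdeg_def
  by (rule sum.mono_neutral_left) (use assms in \<open>auto simp: in_keys_iff\<close>)

definition Cc :: "nat \<Rightarrow> (nat \<Rightarrow> nat) \<Rightarrow> bool" where
  "Cc d f \<longleftrightarrow> (\<forall>i\<in>{1..d}. f i \<le> 2) \<and>
     (\<forall>j\<in>{2..d}. sum f {1..j-1} + (if f j > 0 then 1 else 0) \<le> j)"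

lemma sub_sum:
  fixes h :: "'b \<Rightarrow> nat"
  assumes "finite A" "n \<le> sum h A"
  shows "\<exists>g. (\<forall>x. g x \<le> h x) \<and> (\<forall>x. x \<notin> A \<longrightarrow> g x = 0) \<and> sum g A = n"
  using assms
proof (induction A arbitrary: n rule: finite_induct)
  case empty
  then show ?case by (intro exI[of _ "\<lambda>_. 0"]) auto
next
  case (insert a A)
  show ?case
  proof (cases "n \<le> sum h A")
    case True
    then obtain g where g: "\<forall>x. g x \<le> h x" "\<forall>x. x \<notin> A \<longrightarrow> g x = 0" "sum g A = n"
      using insert.IH by blast
    show ?thesis
      using g insert.hyps by (intro exI[of _ g]) auto
  next
    case False
    obtain g where g: "\<forall>x. g x \<le> h x" "\<forall>x. x \<notin> A \<longrightarrow> g x = 0" "sum g A = sum h A"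
      using insert.IH by blast
    define g' where "g' = g(a := n - sum h A)"
    have "sum g' A = sum g A" unfolding g'_def using insert.hyps by (intro sum.cong) auto
    moreover have "g' a = n - sum h A" "\<And>x. x \<noteq> a \<Longrightarrow> g' x = g x" unfolding g'_def by auto
    ultimately show ?thesis using g insert False
      by (intro exI[of _ g']) (auto, metis le_diff_conv order_refl add.commute)
  qed
qed

lemma mem_K:
  assumes "Poly_Mapping.keys \<alpha> \<subseteq> {1..d}"
    and "(mon \<gamma> :: 'a::field mpoly) \<in> {var i ^ 3 | i. 1 \<le> i \<and> i \<le> d} \<union> (\<Union>k\<in>{3..d+1}. D d k)"
    and "\<forall>i. Poly_Mapping.lookup \<gamma> i \<le> Poly_Mapping.lookup \<alpha> i"
  shows "(mon \<alpha> :: 'a mpoly) \<in> K d"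
proof -
  define \<delta> where "\<delta> = \<alpha> - \<gamma>"
  have ad: "\<alpha> = \<delta> + \<gamma>"
    using assms(3) by (intro poly_mapping_eqI) (simp add: \<delta>_def lookup_add lookup_minus)
  have "Poly_Mapping.keys \<delta> \<subseteq> Poly_Mapping.keys \<alpha>"
    by (auto simp: \<delta>_def in_keys_iff lookup_minus)
  then have Pd: "(mon \<delta> :: 'a mpoly) \<in> P d"
    using assms(1) by (auto simp: P_def mon_def)
  have "mon \<alpha> = (\<Sum>g\<in>{mon \<gamma>}. (\<lambda>_. mon \<delta>) g * (g :: 'a mpoly))"
    by (simp add: ad mon_mult)
  then show ?thesis
    unfolding K_def ideal_gen_def using Pd assms(2)
    by (intro CollectI exI[of _ "{mon \<gamma>}"] exI[of _ "\<lambda>_. mon \<delta>"]) auto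
qed

lemma lookup_sum_pm: "Poly_Mapping.lookup (\<Sum>g\<in>S. f g) x = (\<Sum>g\<in>S. Poly_Mapping.lookup (f g) x)"
  by (induction S rule: infinite_finite_induct) (auto simp: lookup_add)

lemma sum_last: "(j::nat) \<ge> 1 \<Longrightarrow> sum f {1..j} = sum f {1..j-1} + (f j :: nat)"
  by (cases j) (auto simp: sum.cl_ivl_Suc)

lemma Cc_notK:
  assumes "Cc d (Poly_Mapping.lookup \<alpha>)"
  shows "(mon \<alpha> :: 'a::field mpoly) \<notin> K d"
proof
  let ?f = "Poly_Mapping.lookup \<alpha>"
  assume "(mon \<alpha> :: 'a mpoly) \<in> K d"
  then obtain S c where S: "finite S" "S \<subseteq> {var i ^ 3 | i. 1 \<le> i \<and> i \<le> d} \<union> (\<Union>k\<in>{3..d+1}. D d k)"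
    and eq: "(mon \<alpha> :: 'a mpoly) = (\<Sum>g\<in>S. c g * g)"
    unfolding K_def ideal_gen_def by blast
  have zero: "Poly_Mapping.lookup (c g * g) \<alpha> = 0" if "g \<in> S" for g
  proof -
    have "g \<in> {var i ^ 3 | i. 1 \<le> i \<and> i \<le> d} \<union> (\<Union>k\<in>{3..d+1}. D d k)"
      using S that by blast
    then show ?thesis
    proof
      assume "g \<in> {var i ^ 3 | i. 1 \<le> i \<and> i \<le> d}"
      then obtain i where i: "1 \<le> i" "i \<le> d" "g = mon (Poly_Mapping.single i 3)"
        by (auto simp: var_cube)
      have "\<alpha> \<noteq> x + Poly_Mapping.single i 3" for x
      proof
        assume "\<alpha> = x + Poly_Mapping.single i 3"
        then have "?f i \<ge> 3" by (simp add: lookup_add)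
        moreover have "?f i \<le> 2" using assms i by (auto simp: Cc_def)
        ultimately show False by simp
      qed
      then show ?thesis using i by (simp add: lookup_mult_mon_zero)
    next
      assume "g \<in> (\<Union>k\<in>{3..d+1}. D d k)"
      then obtain k \<gamma> where k: "k \<in> {3..d+1}" "g = mon \<gamma>" "Poly_Mapping.keys \<gamma> \<subseteq> {1..k-1}"
        "mdeg \<gamma> = k" "Poly_Mapping.lookup \<gamma> (k-1) < 2"
        by (auto simp: D_def split: if_splits)
      have "\<alpha> \<noteq> x + \<gamma>" for x
      proof
        assume "\<alpha> = x + \<gamma>"
        then have le: "\<And>i. Poly_Mapping.lookup \<gamma> i \<le> ?f i" by (simp add: lookup_add)
        define j where "j = k - 1"
        have j: "j \<in> {2..d}" "k = Suc j" using k unfolding j_def by auto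
        have "k = sum (Poly_Mapping.lookup \<gamma>) {1..j}"
          using k mdeg_S[of \<gamma> j] unfolding j_def by simp
        also have "\<dots> = sum (Poly_Mapping.lookup \<gamma>) {1..j-1} + Poly_Mapping.lookup \<gamma> j"
          using j by (intro sum_last) simp
        also have "\<dots> \<le> sum ?f {1..j-1} + (if ?f j > 0 then 1 else 0)"
        proof (rule add_mono)
          show "sum (Poly_Mapping.lookup \<gamma>) {1..j-1} \<le> sum ?f {1..j-1}"
            by (rule sum_mono) (rule le)
          show "Poly_Mapping.lookup \<gamma> j \<le> (if ?f j > 0 then 1 else 0)"
            using le[of j] k(5) unfolding j_def by auto
        qed
        also have "\<dots> \<le> j" using assms j by (auto simp: Cc_def)
        finally show False using j by simp
      qed
      then show ?thesis using k by (simp add: lookup_mult_mon_zero)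
    qed
  qed
  have "Poly_Mapping.lookup (mon \<alpha> :: 'a mpoly) \<alpha> = 1" by (simp add: mon_def)
  moreover have "Poly_Mapping.lookup (mon \<alpha> :: 'a mpoly) \<alpha> = 0"
    unfolding eq lookup_sum_pm using zero by simp
  ultimately show False by simp
qed

lemma notCc_K:
  assumes keys: "Poly_Mapping.keys \<alpha> \<subseteq> {1..d}" and nC: "\<not> Cc d (Poly_Mapping.lookup \<alpha>)"
  shows "(mon \<alpha> :: 'a::field mpoly) \<in> K d"
proof -
  let ?f = "Poly_Mapping.lookup \<alpha>"
  let ?G = "{var i ^ 3 | i. 1 \<le> i \<and> i \<le> d} \<union> (\<Union>k\<in>{3..d+1}. D d k) :: 'a mpoly set"
  consider (a) i where "i \<in> {1..d}" "?f i > 2"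
    | (b) j where "j \<in> {2..d}" "sum ?f {1..j-1} + (if ?f j > 0 then 1 else 0) > j"
    using nC unfolding Cc_def by (auto simp: not_le)
  then show ?thesis
  proof cases
    case a
    have "mon (Poly_Mapping.single i 3) \<in> ?G"
      using a by (auto simp flip: var_cube)
    moreover have "\<forall>x. Poly_Mapping.lookup (Poly_Mapping.single i 3) x \<le> ?f x"
      using a by (auto simp: lookup_single when_def)
    ultimately show ?thesis by (intro mem_K[OF keys])
  next
    case b
    define h where "h = (\<lambda>i. if i \<in> {1..j-1} then ?f i else if i = j then min (?f j) 1 else 0)"
    have "sum h {1..j} = sum h {1..j-1} + h j" using b by (intro sum_last) simp
    also have "sum h {1..j-1} = sum ?f {1..j-1}" unfolding h_def by (intro sum.cong) auto
    finally have "sum h {1..j} \<ge> Suc j" using b by (auto simp: h_def split: if_splits)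
    then obtain g where g: "\<forall>x. g x \<le> h x" "\<forall>x. x \<notin> {1..j} \<longrightarrow> g x = 0" "sum g {1..j} = Suc j"
      using sub_sum[of "{1..j}" "Suc j" h] by auto
    have fin: "finite {x. g x \<noteq> 0}"
      by (rule finite_subset[of _ "{1..j}"]) (use g in auto)
    define \<gamma> where "\<gamma> = Abs_poly_mapping g"
    have lg: "Poly_Mapping.lookup \<gamma> = g" unfolding \<gamma>_def using fin by simp
    have kg: "Poly_Mapping.keys \<gamma> \<subseteq> {1..j}" using g by (auto simp: in_keys_iff lg)
    have "mdeg \<gamma> = Suc j" using mdeg_S[OF kg] g by (simp add: lg)
    moreover have "Poly_Mapping.lookup \<gamma> j < 2" using g(1)[rule_format, of j] b by (auto simp: lg h_def split: if_splits)
    ultimately have "mon \<gamma> \<in> D d (Suc j)"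
      using b kg by (auto simp: D_def)
    then have "(mon \<gamma> :: 'a mpoly) \<in> ?G" using b by auto
    moreover have "\<forall>x. Poly_Mapping.lookup \<gamma> x \<le> ?f x"
    proof
      fix x show "Poly_Mapping.lookup \<gamma> x \<le> ?f x"
        using g(1)[rule_format, of x] by (auto simp: lg h_def split: if_splits)
    qed
    ultimately show ?thesis by (intro mem_K[OF keys])
  qed
qed

lemma notK_iff:
  assumes "Poly_Mapping.keys \<alpha> \<subseteq> {1..d}"
  shows "(mon \<alpha> :: 'a::field mpoly) \<notin> K d \<longleftrightarrow> Cc d (Poly_Mapping.lookup \<alpha>)"
  using Cc_notK notCc_K[OF assms] by blast

definition add1 :: "(nat \<Rightarrow> nat) \<Rightarrow> nat \<Rightarrow> nat \<Rightarrow> nat" where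
  "add1 f i = (\<lambda>x. f x + (if x = i then 1 else 0))"

lemma sum_add1: "sum (add1 f i) {1..m} = sum f {1..m} + (if i \<in> {1..m} then 1 else 0)"
  unfolding add1_def by (simp add: sum.distrib)

lemma C_add:
  assumes C: "Cc d f" and i: "i \<in> {1..d}" "f i \<le> 1" "sum f {1..i-1} + 1 \<le> i"
    and sl: "\<forall>j. i < j \<and> j \<le> d \<longrightarrow> sum f {1..j-1} + 1 + (if f j > 0 then 1 else 0) \<le> j"
  shows "Cc d (add1 f i)"
  unfolding Cc_def
proof (intro conjI ballI)
  fix x assume "x \<in> {1..d}"
  then show "add1 f i x \<le> 2" using C i by (auto simp: Cc_def add1_def)
next
  fix j assume j: "j \<in> {2..d}"
  consider "j < i" | "j = i" | "j > i" by linarith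
  then show "sum (add1 f i) {1..j-1} + (if add1 f i j > 0 then 1 else 0) \<le> j"
  proof cases
    case 1
    have "sum (add1 f i) {1..j-1} = sum f {1..j-1}"
      using 1 unfolding sum_add1 by auto
    moreover have "add1 f i j = f j" using 1 by (auto simp: add1_def)
    ultimately show ?thesis using C j by (auto simp: Cc_def)
  next
    case 2
    have "sum (add1 f i) {1..j-1} = sum f {1..j-1}"
      using 2 unfolding sum_add1 by auto
    moreover have "add1 f i j = f j + 1" using 2 by (auto simp: add1_def)
    ultimately show ?thesis using i j 2 by auto
  next
    case 3
    have "sum (add1 f i) {1..j-1} = sum f {1..j-1} + 1"
      using 3 i unfolding sum_add1 by auto
    moreover have "add1 f i j = f j" using 3 by (auto simp: add1_def)
    ultimately show ?thesis using sl j 3 by auto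
  qed
qed

lemma step_top:
  assumes "Cc d f" "d \<ge> 1" "f d \<le> 1" "sum f {1..d-1} + 1 \<le> d"
  shows "Cc d (add1 f d)"
  using assms by (intro C_add) auto

lemma step_low_aux:
  assumes C: "Cc d f"
  shows "1 \<le> m \<Longrightarrow> m \<le> d \<Longrightarrow>
    (\<forall>j. m < j \<and> j \<le> d \<longrightarrow> sum f {1..j-1} + 1 + (if f j > 0 then 1 else 0) \<le> j) \<Longrightarrow>
    sum f {1..m} + 1 \<le> m \<Longrightarrow> \<exists>i\<in>{1..m}. Cc d (add1 f i)"
proof (induction m)
  case 0
  then show ?case by simp
next
  case (Suc m)
  have last: "sum f {1..Suc m} = sum f {1..m} + f (Suc m)" using sum_last[of "Suc m" f] by simp
  have f2: "f (Suc m) \<le> 2" using C Suc.prems by (auto simp: Cc_def)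
  show ?case
  proof (cases "f (Suc m) \<le> 1")
    case True
    have "Cc d (add1 f (Suc m))"
      using Suc.prems True last by (intro C_add[OF C]) auto
    then show ?thesis by auto
  next
    case False
    then have fe: "f (Suc m) = 2" using f2 by simp
    have m1: "m \<ge> 1"
    proof (rule ccontr)
      assume "\<not> m \<ge> 1"
      then have "m = 0" by simp
      then show False using Suc.prems(4) fe by simp
    qed
    have "\<forall>j. m < j \<and> j \<le> d \<longrightarrow> sum f {1..j-1} + 1 + (if f j > 0 then 1 else 0) \<le> j"
    proof (intro allI impI)
      fix j assume j: "m < j \<and> j \<le> d"
      show "sum f {1..j-1} + 1 + (if f j > 0 then 1 else 0) \<le> j"
      proof (cases "j = Suc m")
        case True
        then show ?thesis using Suc.prems(4) last fe by simp
      next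
        case False
        then show ?thesis using Suc.prems(3) j by auto
      qed
    qed
    then obtain i where "i \<in> {1..m}" "Cc d (add1 f i)"
      using Suc.IH m1 Suc.prems last fe by auto
    then show ?thesis by auto
  qed
qed

lemma step_low:
  assumes C: "Cc d f" and "d \<ge> 2" "sum f {1..d-1} + 2 \<le> d"
  shows "\<exists>i\<in>{1..d-1}. Cc d (add1 f i)"
proof (rule step_low_aux[OF C])
  show "\<forall>j. d - 1 < j \<and> j \<le> d \<longrightarrow> sum f {1..j-1} + 1 + (if f j > 0 then 1 else 0) \<le> j"
  proof (intro allI impI)
    fix j assume "d - 1 < j \<and> j \<le> d"
    then have "j = d" by auto
    then show "sum f {1..j-1} + 1 + (if f j > 0 then 1 else 0) \<le> j" using assms by auto
  qed
qed (use assms in auto)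

lemma lookup_ext: "Poly_Mapping.lookup (Poly_Mapping.single i 1 + \<alpha>) = add1 (Poly_Mapping.lookup \<alpha>) i"
  by (auto simp: add1_def lookup_add lookup_single when_def)

lemma keys_ext:
  assumes "Poly_Mapping.keys \<alpha> \<subseteq> {1..d}" "i \<in> {1..d}"
  shows "Poly_Mapping.keys (Poly_Mapping.single i (1::nat) + \<alpha>) \<subseteq> {1..d}"
  using assms keys_add[of "Poly_Mapping.single i (1::nat)" \<alpha>] by auto

lemma mdeg_ext:
  assumes "Poly_Mapping.keys \<alpha> \<subseteq> {1..d}" "i \<in> {1..d}"
  shows "mdeg (Poly_Mapping.single i 1 + \<alpha>) = mdeg \<alpha> + 1"
proof -
  have "mdeg (Poly_Mapping.single i 1 + \<alpha>) = sum (add1 (Poly_Mapping.lookup \<alpha>) i) {1..d}"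
    unfolding mdeg_S[OF keys_ext[OF assms]] lookup_ext ..
  also have "\<dots> = mdeg \<alpha> + 1" unfolding sum_add1 mdeg_S[OF assms(1)] using assms(2) by simp
  finally show ?thesis .
qed

lemma stepA:
  assumes keys: "Poly_Mapping.keys \<alpha> \<subseteq> {1..d}" and C: "Cc d (Poly_Mapping.lookup \<alpha>)"
    and deg: "mdeg \<alpha> < d"
  shows "\<exists>i\<in>{1..d}. Cc d (add1 (Poly_Mapping.lookup \<alpha>) i) \<and> add1 (Poly_Mapping.lookup \<alpha>) i d \<ge> 1"
proof -
  let ?f = "Poly_Mapping.lookup \<alpha>"
  have d1: "d \<ge> 1" using deg by simp
  have sd: "mdeg \<alpha> = sum ?f {1..d-1} + ?f d" using mdeg_S[OF keys] sum_last[OF d1] by simp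
  have f2: "?f d \<le> 2" using C d1 by (auto simp: Cc_def)
  show ?thesis
  proof (cases "?f d \<le> 1")
    case True
    have "Cc d (add1 ?f d)" using step_top[OF C d1 True] sd deg by simp
    then show ?thesis using d1 by (auto simp: add1_def)
  next
    case False
    then have fe: "?f d = 2" using f2 by simp
    have d2: "d \<ge> 2"
    proof (rule ccontr)
      assume "\<not> d \<ge> 2" then have "d = 1" using d1 by simp
      then show False using sd fe deg by simp
    qed
    obtain i where i: "i \<in> {1..d-1}" "Cc d (add1 ?f i)"
      using step_low[OF C d2] sd deg fe by auto
    then show ?thesis using fe by (intro bexI[of _ i]) (auto simp: add1_def)
  qed
qed

lemma partA:
  "Poly_Mapping.keys \<alpha> \<subseteq> {1..d} \<Longrightarrow> Cc d (Poly_Mapping.lookup \<alpha>) \<Longrightarrow> mdeg \<alpha> + n = d \<Longrightarrow> n \<ge> 1 \<Longrightarrow>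
   \<exists>\<delta>. Poly_Mapping.keys \<delta> \<subseteq> {1..d} \<and> Poly_Mapping.keys (\<delta> + \<alpha>) \<subseteq> {1..d} \<and> mdeg (\<delta> + \<alpha>) = d
     \<and> Cc d (Poly_Mapping.lookup (\<delta> + \<alpha>)) \<and> Poly_Mapping.lookup (\<delta> + \<alpha>) d \<ge> 1"
proof (induction n arbitrary: \<alpha>)
  case 0
  then show ?case by simp
next
  case (Suc n)
  obtain i where i: "i \<in> {1..d}" "Cc d (add1 (Poly_Mapping.lookup \<alpha>) i)" "add1 (Poly_Mapping.lookup \<alpha>) i d \<ge> 1"
    using stepA[OF Suc.prems(1,2)] Suc.prems(3) by auto
  define \<alpha>' where "\<alpha>' = Poly_Mapping.single i 1 + \<alpha>"
  have k': "Poly_Mapping.keys \<alpha>' \<subseteq> {1..d}" unfolding \<alpha>'_def using keys_ext[OF Suc.prems(1) i(1)] .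
  have m': "mdeg \<alpha>' = mdeg \<alpha> + 1" unfolding \<alpha>'_def using mdeg_ext[OF Suc.prems(1) i(1)] .
  have l': "Poly_Mapping.lookup \<alpha>' = add1 (Poly_Mapping.lookup \<alpha>) i" unfolding \<alpha>'_def by (rule lookup_ext)
  have ki: "Poly_Mapping.keys (Poly_Mapping.single i (1::nat)) \<subseteq> {1..d}" using i by simp
  show ?case
  proof (cases "n = 0")
    case True
    then show ?thesis using k' m' l' i Suc.prems ki
      by (intro exI[of _ "Poly_Mapping.single i 1"]) (auto simp: \<alpha>'_def)
  next
    case False
    then obtain \<delta> where \<delta>: "Poly_Mapping.keys \<delta> \<subseteq> {1..d}" "Poly_Mapping.keys (\<delta> + \<alpha>') \<subseteq> {1..d}" "mdeg (\<delta> + \<alpha>') = d"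
     "Cc d (Poly_Mapping.lookup (\<delta> + \<alpha>'))" "Poly_Mapping.lookup (\<delta> + \<alpha>') d \<ge> 1"
      using Suc.IH[OF k'] i l' m' Suc.prems by auto
    have "\<delta> + \<alpha>' = (\<delta> + Poly_Mapping.single i 1) + \<alpha>" unfolding \<alpha>'_def by (simp add: add.assoc)
    moreover have "Poly_Mapping.keys (\<delta> + Poly_Mapping.single i 1) \<subseteq> {1..d}"
      using \<delta>(1) ki keys_add[of \<delta> "Poly_Mapping.single i (1::nat)"] by auto
    ultimately show ?thesis using \<delta> by (intro exI[of _ "\<delta> + Poly_Mapping.single i 1"]) auto
  qed
qed

lemma partB:
  assumes keys: "Poly_Mapping.keys \<alpha> \<subseteq> {1..d}" and C: "Cc d (Poly_Mapping.lookup \<alpha>)"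
    and d1: "d \<ge> 1" and deg: "mdeg \<alpha> = d" and ne: "\<not> ends_in \<alpha> (d - 1) 2"
  shows "\<exists>i\<in>{1..d}. Cc d (add1 (Poly_Mapping.lookup \<alpha>) i)"
proof -
  let ?f = "Poly_Mapping.lookup \<alpha>"
  have sd: "mdeg \<alpha> = sum ?f {1..d-1} + ?f d" using mdeg_S[OF keys] sum_last[OF d1] by simp
  have f2: "?f d \<le> 2" using C d1 by (auto simp: Cc_def)
  consider "?f d = 0" | "?f d = 1" | "?f d = 2" using f2 by linarith
  then show ?thesis
  proof cases
    case 1
    have d2: "d \<ge> 2"
    proof (rule ccontr)
      assume "\<not> d \<ge> 2" then have "d = 1" using d1 by simp
      then show False using sd 1 deg by simp
    qed
    have s: "sum ?f {1..d-1} = d" using sd deg 1 by simp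
    have "?f (d-1) = 2"
    proof (cases "d = 2")
      case True
      then show ?thesis using s by simp
    next
      case False
      then have j: "d - 1 \<in> {2..d}" using d2 by auto
      have "sum ?f {1..d-1} = sum ?f {1..d-1-1} + ?f (d-1)" using d2 by (intro sum_last) simp
      moreover have "sum ?f {1..d-1-1} + (if ?f (d-1) > 0 then 1 else 0) \<le> d - 1"
        using C j unfolding Cc_def by blast
      moreover have "?f (d-1) \<le> 2" using C d2 by (auto simp: Cc_def)
      ultimately show ?thesis using s d2 by (cases "?f (d-1) > 0") auto
    qed
    moreover have "Poly_Mapping.keys \<alpha> \<subseteq> {1..d-1}"
    proof
      fix x assume x: "x \<in> Poly_Mapping.keys \<alpha>"
      then have "x \<noteq> d" using 1 by (auto simp: in_keys_iff)
      moreover have "x \<in> {1..d}" using x keys by blast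
      ultimately show "x \<in> {1..d-1}" by auto
    qed
    ultimately have "ends_in \<alpha> (d-1) 2" by (simp add: ends_in_def)
    then show ?thesis using ne by simp
  next
    case 2
    have "Cc d (add1 ?f d)" using step_top[OF C d1] 2 sd deg by simp
    then show ?thesis using d1 by auto
  next
    case 3
    have d2: "d \<ge> 2"
    proof (rule ccontr)
      assume "\<not> d \<ge> 2" then have "d = 1" using d1 by simp
      then show False using sd 3 deg by simp
    qed
    obtain i where i: "i \<in> {1..d-1}" "Cc d (add1 ?f i)"
      using step_low[OF C d2] sd deg 3 by auto
    then show ?thesis by (intro bexI[of _ i]) auto
  qed
qed


theorem mainTheorem11:
  fixes d :: nat and \<alpha> :: "nat \<Rightarrow>\<^sub>0 nat"
    and \<mu> :: "'a::field mpoly"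
  assumes "d \<ge> 1"
    and "Poly_Mapping.keys \<alpha> \<subseteq> {1..d}" and "\<mu> = mon \<alpha>"
  shows "(\<mu> \<notin> K d \<and> mdeg \<alpha> \<le> d - 1 \<longrightarrow>
           (\<exists>\<beta>. Poly_Mapping.keys \<beta> \<subseteq> {1..d} \<and> (\<exists>q\<in>P d. (mon \<beta> :: 'a mpoly) = q * \<mu>)
              \<and> mdeg \<beta> = d \<and> (mon \<beta> :: 'a mpoly) \<notin> K d
              \<and> (ends_in \<beta> d 1 \<or> ends_in \<beta> d 2)))
       \<and> (\<mu> \<notin> K d \<and> mdeg \<alpha> = d \<and> \<not> ends_in \<alpha> (d - 1) 2 \<longrightarrow>
           (\<exists>\<beta>. Poly_Mapping.keys \<beta> \<subseteq> {1..d} \<and> (\<exists>q\<in>P d. (mon \<beta> :: 'a mpoly) = q * \<mu>)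
              \<and> mdeg \<beta> = d + 1 \<and> (mon \<beta> :: 'a mpoly) \<notin> K d))"
proof (intro conjI impI)
  have monP: "(mon \<delta> :: 'a mpoly) \<in> P d" if "Poly_Mapping.keys \<delta> \<subseteq> {1..d}" for \<delta>
    using that by (auto simp: P_def mon_def)
  {
    assume h: "\<mu> \<notin> K d \<and> mdeg \<alpha> \<le> d - 1"
    then have C: "Cc d (Poly_Mapping.lookup \<alpha>)" using notK_iff[OF assms(2)] assms(3) by blast
    obtain \<delta> where \<delta>: "Poly_Mapping.keys \<delta> \<subseteq> {1..d}" "Poly_Mapping.keys (\<delta> + \<alpha>) \<subseteq> {1..d}" "mdeg (\<delta> + \<alpha>) = d"
     "Cc d (Poly_Mapping.lookup (\<delta> + \<alpha>))" "Poly_Mapping.lookup (\<delta> + \<alpha>) d \<ge> 1"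
    proof -
      have "mdeg \<alpha> + (d - mdeg \<alpha>) = d" "d - mdeg \<alpha> \<ge> 1" using h assms(1) by auto
      then show ?thesis using that partA[OF assms(2) C] by blast
    qed
    have "Poly_Mapping.lookup (\<delta> + \<alpha>) d \<le> 2" using \<delta>(4) assms(1) by (auto simp: Cc_def)
    then have "ends_in (\<delta> + \<alpha>) d 1 \<or> ends_in (\<delta> + \<alpha>) d 2" using \<delta>(2,5) by (auto simp: ends_in_def)
    moreover have "(mon (\<delta> + \<alpha>) :: 'a mpoly) \<notin> K d" using notK_iff[OF \<delta>(2)] \<delta>(4) by blast
    moreover have "(mon (\<delta> + \<alpha>) :: 'a mpoly) = mon \<delta> * \<mu>" using assms(3) by (simp add: mon_mult)
    ultimately show "\<exists>\<beta>. Poly_Mapping.keys \<beta> \<subseteq> {1..d} \<and> (\<exists>q\<in>P d. (mon \<beta> :: 'a mpoly) = q * \<mu>)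
              \<and> mdeg \<beta> = d \<and> (mon \<beta> :: 'a mpoly) \<notin> K d
              \<and> (ends_in \<beta> d 1 \<or> ends_in \<beta> d 2)"
      using \<delta> monP[OF \<delta>(1)] by (intro exI[of _ "\<delta> + \<alpha>"]) blast
  }
  {
    assume h: "\<mu> \<notin> K d \<and> mdeg \<alpha> = d \<and> \<not> ends_in \<alpha> (d - 1) 2"
    then have C: "Cc d (Poly_Mapping.lookup \<alpha>)" using notK_iff[OF assms(2)] assms(3) by blast
    obtain i where i: "i \<in> {1..d}" "Cc d (add1 (Poly_Mapping.lookup \<alpha>) i)"
      using partB[OF assms(2) C assms(1)] h by blast
    let ?\<delta> = "Poly_Mapping.single i (1::nat)"
    have k\<delta>: "Poly_Mapping.keys ?\<delta> \<subseteq> {1..d}" using i by simp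
    have kb: "Poly_Mapping.keys (?\<delta> + \<alpha>) \<subseteq> {1..d}" using keys_ext[OF assms(2) i(1)] .
    have "mdeg (?\<delta> + \<alpha>) = d + 1" using mdeg_ext[OF assms(2) i(1)] h by simp
    moreover have "(mon (?\<delta> + \<alpha>) :: 'a mpoly) \<notin> K d" using notK_iff[OF kb] i(2) lookup_ext by metis
    moreover have "(mon (?\<delta> + \<alpha>) :: 'a mpoly) = mon ?\<delta> * \<mu>" using assms(3) by (simp add: mon_mult)
    ultimately show "\<exists>\<beta>. Poly_Mapping.keys \<beta> \<subseteq> {1..d} \<and> (\<exists>q\<in>P d. (mon \<beta> :: 'a mpoly) = q * \<mu>)
              \<and> mdeg \<beta> = d + 1 \<and> (mon \<beta> :: 'a mpoly) \<notin> K d"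
      using kb monP[OF k\<delta>] by (intro exI[of _ "?\<delta> + \<alpha>"]) blast
  }
qed

end
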